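(* Let $A$ be an algorithm of type GroupLIS$(\beta)$, $\beta\in\mathbb{N}$, run with some speedup $s$, and let $I$ be a time interval during which the list $L$ of pending tasks of some cost $c$ contains at least $\beta n^2$ tasks at all times. Then for any two distinct absolute task executions fully contained in $I$, of tasks $\tau_1,\tau_2\in L$ by processors $p_1$ and $p_2$ respectively, we have $\tau_1\ne\tau_2$.
   Context: Model: $n$ processors with ids $1,\dots,n$ and a shared repository; tasks with ids, arrival times and costs are injected over time, processors may crash and restart. A task is pending if injected and its completion not yet reported; once reported it is immediately removed from the pending set. A processor repeatedly obtains the pending set, chooses a task, executes it (a task of cost $\ell$ takes time $\ell/s$ under speedup $s$) and reports it; execution is non-preemptive and a crash loses progress. An absolute task execution of task $\tau$ is an interval $[t,t']$ such that a processor schedules $\tau$ at time $t$ and reports its completion at $t'$ without stopping its execution within $[t,t')$. An algorithm is of type GroupLIS$(\beta)$ if it partitions pending tasks into classes of equal cost, sorts each class in increasing order of arrival time, and whenever a class contains at least $\beta n^2$ pending tasks and a processor $p$ schedules a task from that class, it schedules the $(p\cdot\beta n)$-th task of the class. *)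

theory Defs
  imports Complex_Main "HOL-Library.Product_Lexorder"
begin

text \<open>Processors are 1..n. Tasks are elements of a type 'a (their ids), with arrival
  (injection) time arr and cost cost. A run is described by
  exec p u = Some (tau, t): at time u processor p is executing task tau, whose
  (current, uninterrupted) execution it scheduled at time t; None: idle/crashed.
  A crash or a restart of a task loses progress: a new execution gets a new start time.\<close>

definition reports ::
  "nat \<Rightarrow> real \<Rightarrow> ('a \<Rightarrow> real) \<Rightarrow> (nat \<Rightarrow> real \<Rightarrow> ('a \<times> real) option)
   \<Rightarrow> nat \<Rightarrow> 'a \<Rightarrow> real \<Rightarrow> bool" where
  "reports n s cost exec p tau r \<longleftrightarrow>
     p \<in> {1..n} \<and>
     (\<exists>t. r = t + cost tau / s \<and> (\<forall>u. t \<le> u \<and> u < r \<longrightarrow> exec p u = Some (tau, t)))"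

definition abs_exec ::
  "nat \<Rightarrow> real \<Rightarrow> ('a \<Rightarrow> real) \<Rightarrow> (nat \<Rightarrow> real \<Rightarrow> ('a \<times> real) option)
   \<Rightarrow> nat \<Rightarrow> 'a \<Rightarrow> real \<Rightarrow> real \<Rightarrow> bool" where
  "abs_exec n s cost exec p tau t t' \<longleftrightarrow>
     p \<in> {1..n} \<and> t' = t + cost tau / s \<and>
     (\<forall>u. t \<le> u \<and> u < t' \<longrightarrow> exec p u = Some (tau, t))"

definition pending ::
  "nat \<Rightarrow> real \<Rightarrow> ('a \<Rightarrow> real) \<Rightarrow> ('a \<Rightarrow> real) \<Rightarrow> (nat \<Rightarrow> real \<Rightarrow> ('a \<times> real) option)
   \<Rightarrow> real \<Rightarrow> 'a set" where
  "pending n s arr cost exec t =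
     {tau. arr tau \<le> t \<and> \<not> (\<exists>p r. r \<le> t \<and> reports n s cost exec p tau r)}"

text \<open>The list L of pending tasks of cost c at time t (as a set).\<close>
definition pending_class ::
  "nat \<Rightarrow> real \<Rightarrow> ('a \<Rightarrow> real) \<Rightarrow> ('a \<Rightarrow> real) \<Rightarrow> (nat \<Rightarrow> real \<Rightarrow> ('a \<times> real) option)
   \<Rightarrow> real \<Rightarrow> real \<Rightarrow> 'a set" where
  "pending_class n s arr cost exec c t = {tau \<in> pending n s arr cost exec t. cost tau = c}"

text \<open>1-based position of tau in C sorted by increasing arrival time (ties broken by id).\<close>
definition rank :: "('a::linorder \<Rightarrow> real) \<Rightarrow> 'a set \<Rightarrow> 'a \<Rightarrow> nat" where
  "rank arr C tau = card {x \<in> C. (arr x, x) < (arr tau, tau)} + 1"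

definition valid_run ::
  "nat \<Rightarrow> real \<Rightarrow> ('a \<Rightarrow> real) \<Rightarrow> ('a \<Rightarrow> real) \<Rightarrow> (nat \<Rightarrow> real \<Rightarrow> ('a \<times> real) option) \<Rightarrow> bool" where
  "valid_run n s arr cost exec \<longleftrightarrow>
     (\<forall>tau. cost tau > 0) \<and>
     (\<forall>t. finite {tau. arr tau \<le> t}) \<and>
     (\<forall>p u. p \<notin> {1..n} \<longrightarrow> exec p u = None) \<and>
     (\<forall>p u tau t. exec p u = Some (tau, t) \<longrightarrow> t \<le> u \<and> u < t + cost tau / s) \<and>
     (\<forall>p u tau t. exec p u = Some (tau, t) \<longrightarrow> (\<forall>v. t \<le> v \<and> v \<le> u \<longrightarrow> exec p v = Some (tau, t))) \<and>
     (\<forall>p tau t. exec p t = Some (tau, t) \<longrightarrow> tau \<in> pending n s arr cost exec t)"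

definition group_LIS ::
  "nat \<Rightarrow> nat \<Rightarrow> real \<Rightarrow> ('a::linorder \<Rightarrow> real) \<Rightarrow> ('a \<Rightarrow> real)
   \<Rightarrow> (nat \<Rightarrow> real \<Rightarrow> ('a \<times> real) option) \<Rightarrow> bool" where
  "group_LIS \<beta> n s arr cost exec \<longleftrightarrow>
     (\<forall>p tau t. exec p t = Some (tau, t) \<and>
        card (pending_class n s arr cost exec (cost tau) t) \<ge> \<beta> * n^2 \<longrightarrow>
        rank arr (pending_class n s arr cost exec (cost tau) t) tau = p * \<beta> * n)"

end

theory Submission
  imports Defs
begin

lemma vr_cost: "valid_run n s arr cost exec \<Longrightarrow> cost tau > 0"
  unfolding valid_run_def by (elim conjE) (erule allE)
lemma vr_fin: "valid_run n s arr cost exec \<Longrightarrow> finite {tau. arr tau \<le> t}"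
  unfolding valid_run_def by (elim conjE) (erule allE)
lemma vr_pend: "valid_run n s arr cost exec \<Longrightarrow> exec p t = Some (tau, t) \<Longrightarrow> tau \<in> pending n s arr cost exec t"
  unfolding valid_run_def by (elim conjE) blast

lemma exec_start:
  assumes "s > 0" "valid_run n s arr cost exec" "abs_exec n s cost exec p tau t t'"
  shows "exec p t = Some (tau, t)" "t < t'" "p \<in> {1..n}"
proof -
  have "cost tau > 0" using vr_cost[OF assms(2)] .
  hence "cost tau / s > 0" using assms(1) by simp
  thus "t < t'" using assms(3) unfolding abs_exec_def by simp
  thus "exec p t = Some (tau, t)" using assms(3) unfolding abs_exec_def by simp
  show "p \<in> {1..n}" using assms(3) unfolding abs_exec_def by simp
qed

lemma rank_at:
  assumes "group_LIS \<beta> n s arr cost exec" "exec p t = Some (tau, t)"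
    "card (pending_class n s arr cost exec (cost tau) t) \<ge> \<beta> * n^2"
  shows "rank arr (pending_class n s arr cost exec (cost tau) t) tau = p * \<beta> * n"
  using assms unfolding group_LIS_def by blast

lemma main_case:
  fixes arr cost :: "'a::linorder \<Rightarrow> real"
  assumes s: "s > 0"
    and V: "valid_run n s arr cost exec"
    and G: "group_LIS \<beta> n s arr cost exec"
    and C1: "card (pending_class n s arr cost exec (cost tau) t1) \<ge> \<beta> * n^2"
    and C2: "card (pending_class n s arr cost exec (cost tau) t2) \<ge> \<beta> * n^2"
    and A1: "abs_exec n s cost exec p1 tau t1 t1'"
    and A2: "abs_exec n s cost exec p2 tau t2 t2'"
    and lt: "t1 < t2"
  shows False
proof -
  have e1: "exec p1 t1 = Some (tau, t1)" and p1n: "p1 \<in> {1..n}"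
    using exec_start[OF s V A1] by auto
  have e2: "exec p2 t2 = Some (tau, t2)" using exec_start[OF s V A2] by auto
  have t1': "t1' = t1 + cost tau / s" using A1 unfolding abs_exec_def by simp
  have pend2: "tau \<in> pending n s arr cost exec t2" using vr_pend[OF V e2] .
  have pend1: "tau \<in> pending n s arr cost exec t1" using vr_pend[OF V e1] .
  have t2lt: "t2 < t1'"
  proof (rule ccontr)
    assume "\<not> t2 < t1'"
    hence "reports n s cost exec p1 tau t1'" "t1' \<le> t2"
      using A1 unfolding reports_def abs_exec_def by auto
    thus False using pend2 unfolding pending_def by blast
  qed
  have p12: "p1 \<noteq> p2"
  proof
    assume "p1 = p2"
    hence "exec p1 t2 = Some (tau, t1)" using A1 lt t2lt unfolding abs_exec_def by auto
    thus False using e2 \<open>p1 = p2\<close> lt by simp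
  qed
  define PC where "PC t = pending_class n s arr cost exec (cost tau) t" for t
  define P where "P t = {x \<in> PC t. (arr x, x) < (arr tau, tau)}" for t
  have r1: "card (P t1) + 1 = p1 * \<beta> * n"
    using rank_at[OF G e1 C1] unfolding rank_def P_def PC_def by simp
  have r2: "card (P t2) + 1 = p2 * \<beta> * n"
    using rank_at[OF G e2 C2] unfolding rank_def P_def PC_def by simp
  have fin: "finite (P t1)"
  proof -
    have "P t1 \<subseteq> {x. arr x \<le> t1}"
      unfolding P_def PC_def pending_class_def pending_def by auto
    moreover have "finite {x. arr x \<le> t1}" using vr_fin[OF V] .
    ultimately show ?thesis by (rule finite_subset)
  qed
  have arrtau: "arr tau \<le> t1" using pend1 unfolding pending_def by simp
  have sub: "P t2 \<subseteq> P t1"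
  proof
    fix x assume x: "x \<in> P t2"
    have "arr x \<le> arr tau" using x unfolding P_def by (auto simp: less_prod_def)
    thus "x \<in> P t1" using x lt arrtau unfolding P_def PC_def pending_class_def pending_def
      by fastforce
  qed
  have bn: "\<beta> > 0" "n > 0" using r1 by (auto intro: Nat.gr0I)
  have "card (P t2) < card (P t1)"
  proof -
    have "card (P t2) \<le> card (P t1)" using sub fin by (simp add: card_mono)
    hence "p2 * \<beta> * n \<le> p1 * \<beta> * n" using r1 r2 by linarith
    hence "p2 * (\<beta> * n) \<le> p1 * (\<beta> * n)" by (simp add: mult.assoc)
    hence "p2 \<le> p1" using bn mult_le_cancel2 by (metis nat_0_less_mult_iff)
    hence "p2 < p1" using p12 by simp
    hence "p2 * (\<beta> * n) < p1 * (\<beta> * n)" using bn by simp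
    moreover have "p1*\<beta>*n = p1*(\<beta>*n)" "p2*\<beta>*n = p2*(\<beta>*n)" by (simp_all add: mult.assoc)
    ultimately show ?thesis using r1 r2 by linarith
  qed
  have diffcard: "card (P t1 - P t2) + p2 * \<beta> * n = p1 * \<beta> * n"
    using card_Diff_subset[OF finite_subset[OF sub fin] sub] r1 r2
      card_mono[OF fin sub] by linarith
  have "p2 + 1 \<le> p1"
  proof -
    have "p2 * \<beta> * n < p1 * \<beta> * n" using diffcard \<open>card (P t2) < card (P t1)\<close> card_Diff_subset[OF finite_subset[OF sub fin] sub] by linarith
    hence "p2 * (\<beta> * n) < p1 * (\<beta> * n)" by (simp add: mult.assoc)
    hence "p2 < p1" using mult_less_cancel2 by blast
    thus ?thesis by simp
  qed
  hence "(p2 + 1) * (\<beta> * n) \<le> p1 * (\<beta> * n)" by (rule mult_right_mono) simp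
  moreover have "(p2 + 1) * (\<beta> * n) = p2 * \<beta> * n + \<beta> * n"
    "p1 * (\<beta> * n) = p1 * \<beta> * n" by (simp_all add: algebra_simps)
  ultimately have big: "card (P t1 - P t2) \<ge> \<beta> * n"
    using diffcard by linarith
  have bnn: "\<beta> * n \<ge> n" using bn by simp
  \<comment> \<open>each removed task was reported by some processor other than p1, running at t1\<close>
  have key: "\<forall>x\<in>P t1 - P t2. \<exists>q a. q \<in> {1..n} - {p1} \<and> exec q t1 = Some (x, a) \<and> a < t1"
  proof
    fix x assume x: "x \<in> P t1 - P t2"
    hence xp1: "x \<in> pending n s arr cost exec t1" and cx: "cost x = cost tau"
      and ord: "(arr x, x) < (arr tau, tau)"
      unfolding P_def PC_def pending_class_def by auto
    have "x \<notin> pending n s arr cost exec t2"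
      using x unfolding P_def PC_def pending_class_def by auto
    moreover have "arr x \<le> t2" using xp1 lt unfolding pending_def by auto
    ultimately obtain q r where qr: "r \<le> t2" "reports n s cost exec q x r"
      unfolding pending_def by auto
    have "r > t1"
    proof (rule ccontr)
      assume "\<not> r > t1" thus False using xp1 qr unfolding pending_def by auto
    qed
    from qr(2) obtain a where q: "q \<in> {1..n}" and ra: "r = a + cost x / s"
      and ex: "\<forall>u. a \<le> u \<and> u < r \<longrightarrow> exec q u = Some (x, a)"
      unfolding reports_def by blast
    have "a < t1" using ra cx t1' t2lt qr(1) by simp
    hence eq: "exec q t1 = Some (x, a)" using ex \<open>r > t1\<close> by simp
    have "q \<noteq> p1" using eq e1 \<open>a < t1\<close> by auto
    thus "\<exists>q a. q \<in> {1..n} - {p1} \<and> exec q t1 = Some (x, a) \<and> a < t1"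
      using q eq \<open>a < t1\<close> by blast
  qed
  define f where "f x = (SOME q. \<exists>a. q \<in> {1..n} - {p1} \<and> exec q t1 = Some (x, a) \<and> a < t1)" for x
  have fprop: "\<exists>a. f x \<in> {1..n} - {p1} \<and> exec (f x) t1 = Some (x, a) \<and> a < t1"
    if "x \<in> P t1 - P t2" for x
    unfolding f_def by (rule someI_ex[OF key[rule_format, OF that]])
  have inj: "inj_on f (P t1 - P t2)"
  proof (rule inj_onI)
    fix x y assume x: "x \<in> P t1 - P t2" and y: "y \<in> P t1 - P t2" and fxy: "f x = f y"
    obtain a where a: "exec (f x) t1 = Some (x, a)" using fprop[OF x] by blast
    obtain b where b: "exec (f y) t1 = Some (y, b)" using fprop[OF y] by blast
    show "x = y" using a[unfolded fxy] b by simp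
  qed
  have img: "f ` (P t1 - P t2) \<subseteq> {1..n} - {p1}" using fprop by blast
  have "card (P t1 - P t2) \<le> card ({1..n} - {p1})"
    using card_inj_on_le[OF inj img] by simp
  also have "\<dots> = n - 1" using p1n by simp
  finally show False using big bnn bn by linarith
qed

theorem lemma9:
  fixes n \<beta> :: nat and s c :: real
    and arr cost :: "'a::linorder \<Rightarrow> real"
    and exec :: "nat \<Rightarrow> real \<Rightarrow> ('a \<times> real) option"
    and I :: "real set"
    and p1 p2 :: nat and \<tau>1 \<tau>2 :: 'a and t1 t1' t2 t2' :: real
  assumes "s > 0"
    and "valid_run n s arr cost exec"
    and "group_LIS \<beta> n s arr cost exec"
    and "\<forall>x\<in>I. \<forall>y\<in>I. \<forall>z. x \<le> z \<and> z \<le> y \<longrightarrow> z \<in> I"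
    and "\<forall>t\<in>I. card (pending_class n s arr cost exec c t) \<ge> \<beta> * n^2"
    and "abs_exec n s cost exec p1 \<tau>1 t1 t1'"
    and "abs_exec n s cost exec p2 \<tau>2 t2 t2'"
    and "{t1..t1'} \<subseteq> I" and "{t2..t2'} \<subseteq> I"
    and "(p1, \<tau>1, t1, t1') \<noteq> (p2, \<tau>2, t2, t2')"
    and "cost \<tau>1 = c" and "cost \<tau>2 = c"
  shows "\<tau>1 \<noteq> \<tau>2"
proof
  assume eq: "\<tau>1 = \<tau>2"
  have lt1: "t1 < t1'" and lt2: "t2 < t2'"
    using exec_start[OF assms(1,2,6)] exec_start[OF assms(1,2,7)] by auto
  have I1: "t1 \<in> I" using assms(8) lt1 by auto
  have I2: "t2 \<in> I" using assms(9) lt2 by auto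
  have C1: "card (pending_class n s arr cost exec (cost \<tau>1) t1) \<ge> \<beta> * n^2"
    using assms(5,11) I1 by simp
  have C2: "card (pending_class n s arr cost exec (cost \<tau>1) t2) \<ge> \<beta> * n^2"
    using assms(5,11) I2 by simp
  have A2: "abs_exec n s cost exec p2 \<tau>1 t2 t2'" using assms(7) eq by simp
  consider "t1 < t2" | "t2 < t1" | "t1 = t2" by linarith
  thus False
  proof cases
    case 1 thus ?thesis using main_case[OF assms(1,2,3) C1 C2 assms(6) A2] by blast
  next
    case 2 thus ?thesis using main_case[OF assms(1,2,3) C2 C1 A2 assms(6)] by blast
  next
    case 3
    have e1: "exec p1 t1 = Some (\<tau>1, t1)" using exec_start[OF assms(1,2,6)] by auto
    have e2: "exec p2 t1 = Some (\<tau>1, t1)" using exec_start[OF assms(1,2) A2] 3 by auto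
    have r1: "rank arr (pending_class n s arr cost exec (cost \<tau>1) t1) \<tau>1 = p1 * \<beta> * n"
      by (rule rank_at[OF assms(3) e1 C1])
    have r2: "rank arr (pending_class n s arr cost exec (cost \<tau>1) t1) \<tau>1 = p2 * \<beta> * n"
      by (rule rank_at[OF assms(3) e2 C1])
    have "rank arr (pending_class n s arr cost exec (cost \<tau>1) t1) \<tau>1 > 0"
      unfolding rank_def by simp
    hence bn: "\<beta> > 0" "n > 0" using r1 by (auto intro: Nat.gr0I)
    have "p1 = p2" using r1 r2 bn by simp
    moreover have "t1' = t2'" using assms(6) A2 3 unfolding abs_exec_def by simp
    ultimately show False using assms(10) eq 3 by simp
  qed
qed

end
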